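(* Let $Smr(n)$ be the integer whose decimal expansion is the concatenation of $n+1,n,\ldots,2,1$ (so $Smr(0)=1$, $Smr(1)=21$, $Smr(2)=321$, $\ldots$). For every integer $n\geqslant 0$, put $$l=\lceil \log_{10}(n+2)\rceil,\qquad t_l=10^{l-1}-1,\qquad p_l=10^{l-1}\left(l-\frac{10}{9}\right)+l+\frac19,$$ $$\alpha_l=\frac{s_2-2\cdot 10^l s_1+10^{2l}s_0}{(10^l-1)^2},\qquad \mu_l=\frac{10^{p_l}\left(10^{2l-1}-10^{l-1}-1\right)}{(10^l-1)^2},\qquad \theta_l=\frac{10^{p_l}}{10^l-1},$$ where $s_0=Smr(t_l)$, $s_1=Smr(t_l+1)$, $s_2=Smr(t_l+2)$. Then $$Smr(n)=\alpha_l+\mu_l\,10^{l(n-t_l)}+\theta_l\,(n-t_l)\,10^{l(n-t_l)}.$$ *)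

theory Defs
  imports Complex_Main
begin

text \<open>Number of decimal digits of a natural number (with the convention that 0 has one digit).\<close>
fun ndigits :: "nat \<Rightarrow> nat" where
  "ndigits k = (if k < 10 then 1 else 1 + ndigits (k div 10))"

definition dconcat :: "nat \<Rightarrow> nat \<Rightarrow> nat" where
  "dconcat a b = a * 10 ^ ndigits b + b"

fun Smr :: "nat \<Rightarrow> nat" where
  "Smr 0 = 1"
| "Smr (Suc n) = dconcat (n + 2) (Smr n)"

end

theory Submission
  imports Defs
begin

declare ndigits.simps[simp del]

lemma ndigits_eq: "10^k \<le> m \<Longrightarrow> m < 10^(Suc k) \<Longrightarrow> ndigits m = Suc k"
proof (induction k arbitrary: m)
  case 0
  then show ?case by (subst ndigits.simps) simp
next
  case (Suc k)
  have "m \<ge> 10" using Suc.prems(1)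
  proof -
    have "(1::nat) \<le> 10^k" by simp
    then have "(10::nat) \<le> 10 * 10^k" by simp
    then show ?thesis using Suc.prems(1) by (metis order.trans power_Suc)
  qed
  moreover have "10^k \<le> m div 10" using Suc.prems(1)
    by (simp add: less_eq_div_iff_mult_less_eq mult.commute)
  moreover have "m div 10 < 10^Suc k" using Suc.prems(2)
    by (simp add: div_less_iff_less_mult mult.commute)
  ultimately show ?case using Suc.IH by (subst ndigits.simps) simp
qed

lemma ndigits_upper: "m < 10 ^ ndigits m"
proof (induction m rule: ndigits.induct)
  case (1 k)
  show ?case
  proof (cases "k < 10")
    case True then show ?thesis by (subst ndigits.simps) simp
  next
    case False
    then have "k div 10 < 10 ^ ndigits (k div 10)" using 1 by simp
    then have "k < 10 * 10 ^ ndigits (k div 10)" by linarith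
    then show ?thesis using False by (subst ndigits.simps) simp
  qed
qed

lemma ndigits_lower: "1 \<le> m \<Longrightarrow> 10 ^ (ndigits m - 1) \<le> m"
proof (induction m rule: ndigits.induct)
  case (1 k)
  show ?case
  proof (cases "k < 10")
    case True then show ?thesis using 1 by (subst ndigits.simps) simp
  next
    case False
    then have "10 ^ (ndigits (k div 10) - 1) \<le> k div 10" using 1 by simp
    moreover have "ndigits (k div 10) \<ge> 1" by (subst ndigits.simps) simp
    ultimately have "10 ^ ndigits (k div 10) \<le> k"
      by (metis Suc_diff_le diff_Suc_1 less_eq_div_iff_mult_less_eq mult.commute power_Suc zero_less_numeral)
    then show ?thesis using False by (subst ndigits.simps) simp
  qed
qed

lemma ndigits_pos: "ndigits m \<ge> 1"
  by (subst ndigits.simps) simp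

lemma ndigits_dconcat:
  assumes "a \<ge> 1" shows "ndigits (dconcat a b) = ndigits a + ndigits b"
proof -
  let ?A = "ndigits a" and ?B = "ndigits b"
  have la: "10 ^ (?A - 1) \<le> a" using ndigits_lower assms by blast
  have ua: "a < 10 ^ ?A" by (rule ndigits_upper)
  have ub: "b < 10 ^ ?B" by (rule ndigits_upper)
  have "10 ^ (?A - 1 + ?B) \<le> a * 10 ^ ?B" using la by (simp add: power_add)
  then have lo: "10 ^ (?A - 1 + ?B) \<le> dconcat a b" unfolding dconcat_def by simp
  have "a * 10 ^ ?B + b < (a + 1) * 10 ^ ?B" using ub by simp
  also have "\<dots> \<le> 10 ^ ?A * 10 ^ ?B" using ua by (intro mult_right_mono) auto
  finally have hi: "dconcat a b < 10 ^ Suc (?A - 1 + ?B)"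
    unfolding dconcat_def using ndigits_pos[of a] by (simp add: power_add[symmetric])
  show ?thesis using ndigits_eq[OF lo hi] ndigits_pos[of a] by simp
qed

definition L :: "nat \<Rightarrow> nat" where "L n = ndigits (Smr n)"

lemma L_Suc: "L (Suc n) = ndigits (n + 2) + L n"
  unfolding L_def by (simp add: ndigits_dconcat)

lemma L_sum: "L n = (\<Sum>k\<in>{1..Suc n}. ndigits k)"
proof (induction n)
  case 0 then show ?case unfolding L_def by (simp add: ndigits.simps)
next
  case (Suc n) then show ?case by (simp add: L_Suc)
qed

lemma G_formula: "9 * real (\<Sum>k\<in>{1..<10^j}. ndigits k) = 9 * real j * 10^j - 10^j + 1"
proof (induction j)
  case 0 then show ?case by simp
next
  case (Suc j)
  have le: "(1::nat) \<le> 10^j" by simp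
  have le2: "(10::nat)^j \<le> 10^Suc j" by simp
  have "(\<Sum>k\<in>{1..<10^Suc j}. ndigits k) = (\<Sum>k\<in>{1..<10^j}. ndigits k) + (\<Sum>k\<in>{10^j..<10^Suc j}. ndigits k)"
    by (rule sum.atLeastLessThan_concat[OF le le2, symmetric])
  also have "(\<Sum>k\<in>{10^j..<10^Suc j}. ndigits k) = (\<Sum>k\<in>{10^j..<(10::nat)^Suc j}. Suc j)"
    by (rule sum.cong) (auto intro: ndigits_eq)
  also have "\<dots> = Suc j * (10^Suc j - 10^j)" by simp
  finally have "real (\<Sum>k\<in>{1..<10^Suc j}. ndigits k) = real (\<Sum>k\<in>{1..<10^j}. ndigits k) + real (Suc j) * (10^Suc j - 10^j)"
    using le2 by (simp add: of_nat_diff algebra_simps)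
  then show ?case using Suc.IH by (simp add: algebra_simps)
qed

lemma L_t: "9 * real (L (10^k - 1)) = 9 * real k * 10^k - 10^k + 1 + 9 * (k + 1)"
proof -
  have p: "(1::nat) \<le> 10^k" by simp
  have "{1..Suc (10^k - 1)} = insert (10^k) {1..<(10::nat)^k}" using p by auto
  then have "L (10^k - 1) = (\<Sum>k\<in>{1..<10^k}. ndigits k) + ndigits (10^k)"
    by (simp add: L_sum)
  moreover have "ndigits (10^k) = Suc k" by (rule ndigits_eq) auto
  ultimately show ?thesis using G_formula[of k] by (simp add: algebra_simps)
qed

lemma L_lin:
  assumes t: "t + 1 = 10^k"
  shows "t + m + 1 < 10^Suc k \<Longrightarrow> L (t + m) = L t + Suc k * m"
proof (induction m)
  case 0 then show ?case by simp
next
  case (Suc m)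
  have "ndigits (t + m + 2) = Suc k" using Suc.prems t by (intro ndigits_eq) auto
  moreover have "L (t + Suc m) = ndigits (t + m + 2) + L (t + m)"
    using L_Suc[of "t + m"] by simp
  ultimately show ?case using Suc by simp
qed

lemma Smr_step: "real (Smr (Suc n)) = real (Smr n) + real (n + 2) * 10 ^ L n"
  unfolding L_def by (simp add: dconcat_def algebra_simps)

lemma algebra_fact:
  fixes a q s0 :: real and m :: nat
  assumes a: "a > 1"
  defines "s1 \<equiv> s0 + (a/10 + 1) * q"
  defines "s2 \<equiv> s1 + (a/10 + 2) * q * a"
  defines "\<alpha> \<equiv> (s2 - 2 * a * s1 + a^2 * s0) / (a - 1)^2"
  defines "\<mu> \<equiv> q * (a^2/10 - a/10 - 1) / (a - 1)^2"
  defines "\<theta> \<equiv> q / (a - 1)"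
  shows "\<alpha> + \<mu> = s0"
    and "\<alpha> + \<mu> * a^Suc m + \<theta> * real (Suc m) * a^Suc m
         = (\<alpha> + \<mu> * a^m + \<theta> * real m * a^m) + (a/10 + 1 + real m) * q * a^m"
proof -
  have ne: "a - 1 \<noteq> 0" using a by simp
  have D: "(a - 1)^2 \<noteq> 0" using ne by simp
  have "\<alpha> + \<mu> = ((s2 - 2 * a * s1 + a^2 * s0) + q * (a^2/10 - a/10 - 1)) / (a - 1)^2"
    unfolding \<alpha>_def \<mu>_def by (simp add: add_divide_distrib)
  also have "(s2 - 2 * a * s1 + a^2 * s0) + q * (a^2/10 - a/10 - 1) = s0 * (a - 1)^2"
    unfolding s2_def s1_def by (simp add: power2_eq_square field_simps)
  finally show "\<alpha> + \<mu> = s0" using D by simp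
  have e1: "\<mu> * (a - 1) = q * (a^2/10 - a/10 - 1) / (a - 1)"
    unfolding \<mu>_def using ne by (simp add: power2_eq_square)
  have e2: "\<theta> * ((real m + 1) * a - real m) = q * ((real m + 1) * a - real m) / (a - 1)"
    unfolding \<theta>_def by simp
  have "\<mu> * (a - 1) + \<theta> * ((real m + 1) * a - real m)
      = (q * (a^2/10 - a/10 - 1) + q * ((real m + 1) * a - real m)) / (a - 1)"
    unfolding e1 e2 by (simp add: add_divide_distrib)
  also have "q * (a^2/10 - a/10 - 1) + q * ((real m + 1) * a - real m) = (a/10 + 1 + real m) * q * (a - 1)"
    by (simp add: power2_eq_square field_simps)
  finally have key: "\<mu> * (a - 1) + \<theta> * ((real m + 1) * a - real m) = (a/10 + 1 + real m) * q"
    using ne by simp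
  have "\<alpha> + \<mu> * a^Suc m + \<theta> * real (Suc m) * a^Suc m
      = (\<alpha> + \<mu> * a^m + \<theta> * real m * a^m) + a^m * (\<mu> * (a - 1) + \<theta> * ((real m + 1) * a - real m))"
    by (simp add: algebra_simps)
  then show "\<alpha> + \<mu> * a^Suc m + \<theta> * real (Suc m) * a^Suc m
         = (\<alpha> + \<mu> * a^m + \<theta> * real m * a^m) + (a/10 + 1 + real m) * q * a^m"
    unfolding key by (simp add: algebra_simps)
qed

theorem corollary2:
  fixes n :: nat and l :: int and t :: nat
    and p \<alpha> \<mu> \<theta> s0 s1 s2 :: real
  assumes "l = \<lceil>log 10 (real n + 2)\<rceil>"
    and "t = 10 ^ nat (l - 1) - 1"
    and "p = 10 powr (real_of_int l - 1) * (real_of_int l - 10 / 9) + real_of_int l + 1 / 9"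
    and "s0 = real (Smr t)" and "s1 = real (Smr (t + 1))" and "s2 = real (Smr (t + 2))"
    and "\<alpha> = (s2 - 2 * 10 powr (real_of_int l) * s1 + 10 powr (2 * real_of_int l) * s0)
              / (10 powr (real_of_int l) - 1) ^ 2"
    and "\<mu> = 10 powr p * (10 powr (2 * real_of_int l - 1) - 10 powr (real_of_int l - 1) - 1)
              / (10 powr (real_of_int l) - 1) ^ 2"
    and "\<theta> = 10 powr p / (10 powr (real_of_int l) - 1)"
  shows "real (Smr n) = \<alpha> + \<mu> * 10 powr (real_of_int l * (real n - real t))
           + \<theta> * (real n - real t) * 10 powr (real_of_int l * (real n - real t))"
proof -
  have "log 10 (real n + 2) > 0" by simp
  then have lpos: "l \<ge> 1" using assms(1) by linarith
  define k where "k = nat (l - 1)"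
  have lk: "l = int k + 1" using lpos k_def by simp
  have "10 powr real k < real n + 2 \<and> real n + 2 \<le> 10 powr real (k + 1)"
    using ceiling_log_eq_powr_iff[of "real n + 2" 10 k] assms(1) lk by simp
  moreover have "10 powr real (k + 1) = (10::real) ^ (k + 1)" by (rule powr_realpow) simp
  moreover have "10 powr real k = (10::real) ^ k" by (rule powr_realpow) simp
  ultimately have "real (10 ^ k) < real (n + 2) \<and> real (n + 2) \<le> real (10 ^ (k + 1))"
    by simp
  then have nb: "10 ^ k < n + 2" "n + 2 \<le> 10 ^ (k + 1)"
    by (simp_all only: of_nat_less_iff of_nat_le_iff)
  have tk: "t + 1 = 10 ^ k" using assms(2) k_def by simp
  have tn: "t \<le> n" using tk nb by simp
  define M where "M = n - t"
  have nM: "n = t + M" using tn M_def by simp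
  define a :: real where "a = 10 ^ Suc k"
  define q :: real where "q = 10 ^ L t"
  have a1: "a > 1"
  proof -
    have "(1::real) \<le> 10^k" by simp
    then show ?thesis unfolding a_def power_Suc by linarith
  qed
  have rt: "real t = a / 10 - 1" using arg_cong[OF tk, of real] unfolding a_def by simp
  have pL: "p = real (L t)"
  proof -
    have "10 powr (real_of_int l - 1) = 10 ^ k" using lk by (simp add: powr_realpow)
    then have "p = 10 ^ k * (real k + 1 - 10 / 9) + real k + 1 + 1 / 9"
      using assms(3) lk by simp
    moreover have "10^k - 1 = t" using tk by simp
    ultimately show ?thesis using L_t[of k] by (simp add: field_simps)
  qed
  have q: "10 powr p = q" unfolding pL q_def by (simp add: powr_realpow)
  have rl: "real_of_int l = real (Suc k)" using lk by simp
  have pl: "10 powr (real_of_int l) = a" unfolding a_def rl by (rule powr_realpow) simp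
  have p2l: "10 powr (2 * real_of_int l) = a^2"
  proof -
    have "2 * real_of_int l = real (Suc k * 2)" using lk by simp
    then have "10 powr (2 * real_of_int l) = 10 ^ (Suc k * 2)"
      using powr_realpow[of 10 "Suc k * 2"] by simp
    then show ?thesis unfolding a_def by (simp add: power_mult)
  qed
  have p2l1: "10 powr (2 * real_of_int l - 1) = a^2 / 10"
  proof -
    have "10 powr (2 * real_of_int l - 1) = 10 powr (2 * real_of_int l) / 10"
      by (simp add: powr_diff)
    then show ?thesis using p2l by simp
  qed
  have pl1: "10 powr (real_of_int l - 1) = a / 10"
    using pl by (simp add: powr_diff)
  have pM: "10 powr (real_of_int l * (real n - real t)) = a ^ M"
  proof -
    have "real_of_int l * (real n - real t) = real (Suc k * M)" using lk nM by (simp add: algebra_simps)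
    then have "10 powr (real_of_int l * (real n - real t)) = 10 ^ (Suc k * M)"
      using powr_realpow[of 10 "Suc k * M"] by simp
    then show ?thesis unfolding a_def by (simp only: power_mult)
  qed
  have nt: "real n - real t = real M" using nM by simp
  have s1: "s1 = s0 + (a/10 + 1) * q"
    using assms(4,5) Smr_step[of t] rt unfolding q_def by simp
  have Lt1: "L (t + 1) = L t + Suc k"
  proof -
    have "(1::nat) \<le> 10^k" by simp
    then have "t + 1 + 1 < 10 ^ Suc k" using tk unfolding power_Suc by linarith
    then show ?thesis using L_lin[OF tk, of 1] by simp
  qed
  have s2: "s2 = s1 + (a/10 + 2) * q * a"
    using assms(5,6) Smr_step[of "t+1"] rt Lt1 unfolding q_def a_def by (simp add: power_add)
  have \<alpha>: "\<alpha> = (s0 + (a/10 + 1) * q + (a/10 + 2) * q * a - 2 * a * (s0 + (a/10 + 1) * q) + a^2 * s0) / (a - 1)^2"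
    using assms(7) s1 s2 pl p2l by simp
  have \<mu>: "\<mu> = q * (a^2/10 - a/10 - 1) / (a - 1)^2"
    using assms(8) q p2l1 pl1 pl by simp
  have \<theta>: "\<theta> = q / (a - 1)" using assms(9) q pl by simp
  note AF = algebra_fact[OF a1, of s0 q, folded \<alpha> \<mu> \<theta>]
  have main: "t + m \<le> n \<Longrightarrow> real (Smr (t + m)) = \<alpha> + \<mu> * a^m + \<theta> * real m * a^m" for m
  proof (induction m)
    case 0 then show ?case using AF(1) assms(4) by simp
  next
    case (Suc m)
    have "t + m + 1 < 10 ^ Suc k" using Suc.prems nb by simp
    then have Lm: "L (t + m) = L t + Suc k * m" using L_lin[OF tk] by simp
    have "real (Smr (t + Suc m)) = real (Smr (t + m)) + real (t + m + 2) * 10 ^ L (t + m)"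
      using Smr_step[of "t + m"] by simp
    also have "real (t + m + 2) = a/10 + 1 + real m" using rt by simp
    also have "(10::real) ^ L (t + m) = q * a ^ m" unfolding Lm q_def a_def
      by (simp add: power_add power_mult)
    finally show ?case using Suc AF(2)[of m] by (simp add: algebra_simps)
  qed
  have pM': "10 powr (real_of_int l * real M) = a^M" using pM nt by simp
  show ?thesis unfolding nt pM' using main[of M] nM by simp
qed

end
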